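(* Let $G$ be a non-trivial connected graph, and let $k$ be a positive integer. Then $\dim_{k,f}(G)=1$ if and only if $G$ is isomorphic to the path $P_i$ for some $i\in\{2,3,\ldots,k+2\}$.
   Context: All graphs are finite, simple, undirected and connected; $P_i$ denotes the path on $i$ vertices. $d(x,y)$ is the length of a shortest $x$–$y$ path in $G$. For a positive integer $k$, $d_k(x,y)=\min\{d(x,y),k+1\}$ and $R_k\{x,y\}=\{z\in V(G): d_k(x,z)\neq d_k(y,z)\}$. For a function $g$ on $V(G)$ and $U\subseteq V(G)$, $g(U)=\sum_{s\in U}g(s)$. A function $h:V(G)\to[0,1]$ is a $k$-truncated resolving function of $G$ if $h(R_k\{x,y\})\ge 1$ for all distinct $x,y\in V(G)$. $\dim_{k,f}(G)=\min\{h(V(G)): h \text{ is a } k\text{-truncated resolving function of } G\}$. *)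

theory Defs
  imports "HOL-Analysis.Analysis"
begin

fun is_walk :: "('a \<Rightarrow> 'a \<Rightarrow> bool) \<Rightarrow> 'a list \<Rightarrow> bool" where
  "is_walk E [] = False"
| "is_walk E [x] = True"
| "is_walk E (x # y # xs) = (E x y \<and> is_walk E (y # xs))"

definition simple_graph :: "'a set \<Rightarrow> ('a \<Rightarrow> 'a \<Rightarrow> bool) \<Rightarrow> bool" where
  "simple_graph V E \<longleftrightarrow> finite V \<and> (\<forall>x y. E x y \<longrightarrow> x \<in> V \<and> y \<in> V)
     \<and> (\<forall>x y. E x y \<longrightarrow> E y x) \<and> (\<forall>x. \<not> E x x)"

definition connected_graph :: "'a set \<Rightarrow> ('a \<Rightarrow> 'a \<Rightarrow> bool) \<Rightarrow> bool" where
  "connected_graph V E \<longleftrightarrow> V \<noteq> {} \<and> (\<forall>x\<in>V. \<forall>y\<in>V. \<exists>p. is_walk E p \<and> set p \<subseteq> V \<and> hd p = x \<and> last p = y)"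

(* d(x,y): length (number of edges) of a shortest x-y walk *)
definition gdist :: "'a set \<Rightarrow> ('a \<Rightarrow> 'a \<Rightarrow> bool) \<Rightarrow> 'a \<Rightarrow> 'a \<Rightarrow> nat" where
  "gdist V E x y = (LEAST n. \<exists>p. is_walk E p \<and> set p \<subseteq> V \<and> hd p = x \<and> last p = y \<and> length p = Suc n)"

definition tdist :: "'a set \<Rightarrow> ('a \<Rightarrow> 'a \<Rightarrow> bool) \<Rightarrow> nat \<Rightarrow> 'a \<Rightarrow> 'a \<Rightarrow> nat" where
  "tdist V E k x y = min (gdist V E x y) (k + 1)"

definition Rk :: "'a set \<Rightarrow> ('a \<Rightarrow> 'a \<Rightarrow> bool) \<Rightarrow> nat \<Rightarrow> 'a \<Rightarrow> 'a \<Rightarrow> 'a set" where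
  "Rk V E k x y = {z \<in> V. tdist V E k x z \<noteq> tdist V E k y z}"

definition k_trunc_resolving_fn :: "'a set \<Rightarrow> ('a \<Rightarrow> 'a \<Rightarrow> bool) \<Rightarrow> nat \<Rightarrow> ('a \<Rightarrow> real) \<Rightarrow> bool" where
  "k_trunc_resolving_fn V E k h \<longleftrightarrow>
     (\<forall>z\<in>V. 0 \<le> h z \<and> h z \<le> 1) \<and>
     (\<forall>x\<in>V. \<forall>y\<in>V. x \<noteq> y \<longrightarrow> sum h (Rk V E k x y) \<ge> 1)"

definition dim_kf :: "'a set \<Rightarrow> ('a \<Rightarrow> 'a \<Rightarrow> bool) \<Rightarrow> nat \<Rightarrow> real" where
  "dim_kf V E k = Inf {sum h V | h. k_trunc_resolving_fn V E k h}"

definition iso_to_path :: "'a set \<Rightarrow> ('a \<Rightarrow> 'a \<Rightarrow> bool) \<Rightarrow> nat \<Rightarrow> bool" where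
  "iso_to_path V E i \<longleftrightarrow> (\<exists>f. bij_betw f V {0..<i} \<and>
     (\<forall>x\<in>V. \<forall>y\<in>V. E x y \<longleftrightarrow> (f x = f y + 1 \<or> f y = f x + 1)))"

end

theory Submission
  imports Defs
begin

locale sgraph =
  fixes V :: "'a set" and E :: "'a \<Rightarrow> 'a \<Rightarrow> bool"
  assumes sg: "simple_graph V E" and cg: "connected_graph V E"
begin

lemma finV: "finite V" using sg by (simp add: simple_graph_def)
lemma EV1: "E x y \<Longrightarrow> x \<in> V" using sg by (simp add: simple_graph_def)
lemma EV2: "E x y \<Longrightarrow> y \<in> V" using sg by (simp add: simple_graph_def)
lemma Esym: "E x y \<Longrightarrow> E y x" using sg by (simp add: simple_graph_def)
lemma Eirr: "\<not> E x x" using sg by (simp add: simple_graph_def)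

lemma walk_ne: "is_walk E p \<Longrightarrow> p \<noteq> []" by (cases p) auto

lemma walk_exists:
  assumes "x \<in> V" "y \<in> V"
  shows "\<exists>p. is_walk E p \<and> set p \<subseteq> V \<and> hd p = x \<and> last p = y \<and> length p = Suc (gdist V E x y)"
proof -
  obtain p where p: "is_walk E p" "set p \<subseteq> V" "hd p = x" "last p = y"
    using cg assms unfolding connected_graph_def by blast
  then have "length p = Suc (length p - 1)" using walk_ne by (cases p) auto
  with p have "\<exists>n. \<exists>p. is_walk E p \<and> set p \<subseteq> V \<and> hd p = x \<and> last p = y \<and> length p = Suc n" by blast
  then show ?thesis unfolding gdist_def by (rule LeastI_ex)
qed

lemma gdist_le:
  assumes "is_walk E p" "set p \<subseteq> V" "hd p = x" "last p = y"
  shows "gdist V E x y \<le> length p - 1"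
proof -
  have "length p = Suc (length p - 1)" using assms walk_ne by (cases p) auto
  with assms show ?thesis unfolding gdist_def by (intro Least_le) metis
qed

lemma gdist_self: "x \<in> V \<Longrightarrow> gdist V E x x = 0"
  using gdist_le[of "[x]" x x] by simp

lemma gdist_zero:
  assumes "x \<in> V" "y \<in> V" "gdist V E x y = 0" shows "x = y"
proof -
  obtain p where p: "is_walk E p" "set p \<subseteq> V" "hd p = x" "last p = y" "length p = Suc 0"
    using walk_exists[OF assms(1,2)] assms(3) by auto
  then show ?thesis by (cases p) auto
qed

lemma gdist_edge:
  assumes "E a b" "z \<in> V" shows "gdist V E a z \<le> Suc (gdist V E b z)"
proof -
  obtain p where p: "is_walk E p" "set p \<subseteq> V" "hd p = b" "last p = z" "length p = Suc (gdist V E b z)"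
    using walk_exists[OF EV2[OF assms(1)] assms(2)] by auto
  then obtain q where q: "p = b # q" by (cases p) auto
  have "is_walk E (a # p)" using p q assms(1) by simp
  moreover have "set (a # p) \<subseteq> V" using p EV1[OF assms(1)] by simp
  ultimately have "gdist V E a z \<le> length (a # p) - 1" using p q by (intro gdist_le) auto
  then show ?thesis using p by simp
qed

lemma gdist_descend:
  assumes "v \<in> V" "z \<in> V" "gdist V E v z = Suc m"
  shows "\<exists>w\<in>V. E v w \<and> gdist V E w z = m"
proof -
  obtain p where p: "is_walk E p" "set p \<subseteq> V" "hd p = v" "last p = z" "length p = Suc (Suc m)"
    using walk_exists[OF assms(1,2)] assms(3) by auto
  then obtain w q where q: "p = v # w # q"
    by (cases p; cases "tl p") auto
  have w: "is_walk E (w # q)" "E v w" using p q by auto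
  have "gdist V E w z \<le> length (w # q) - 1"
    using w p q by (intro gdist_le) auto
  then have "gdist V E w z \<le> m" using p q by simp
  moreover have "Suc m \<le> Suc (gdist V E w z)" using gdist_edge[OF w(2) assms(2)] assms(3) by simp
  ultimately show ?thesis using w p q by auto
qed

lemma path_from_inj:
  assumes z: "z \<in> V" and inj: "inj_on (\<lambda>v. tdist V E k v z) V" and c2: "card V \<ge> 2"
  shows "\<exists>i\<in>{2..k+2}. iso_to_path V E i"
proof -
  define d where "d = (\<lambda>v. gdist V E v z)"
  have reach: "\<forall>v\<in>V. d v = m \<longrightarrow> (\<forall>j\<le>m. \<exists>u\<in>V. d u = j)" for m
  proof (induction m)
    case 0 then show ?case by auto
  next
    case (Suc m)
    show ?case
    proof (intro ballI impI allI)
      fix v j assume v: "v \<in> V" "d v = Suc m" and j: "j \<le> Suc m"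
      obtain w where w: "w \<in> V" "E v w" "d w = m" using gdist_descend[OF v(1) z] v(2) d_def by auto
      show "\<exists>u\<in>V. d u = j"
      proof (cases "j = Suc m")
        case True then show ?thesis using v by auto
      next
        case False then show ?thesis using Suc.IH w j by auto
      qed
    qed
  qed
  have bound: "d v \<le> k + 1" if v: "v \<in> V" for v
  proof (rule ccontr)
    assume "\<not> d v \<le> k + 1"
    then have "k + 1 \<le> d v" "k + 2 \<le> d v" by auto
    then obtain u1 u2 where u: "u1 \<in> V" "u2 \<in> V" "d u1 = k+1" "d u2 = k+2"
    proof -
      have r: "\<forall>j\<le>d v. \<exists>u\<in>V. d u = j" using reach[of "d v"] v by blast
      from r \<open>k + 1 \<le> d v\<close> obtain u1 where "u1 \<in> V" "d u1 = k+1" by blast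
      moreover from r \<open>k + 2 \<le> d v\<close> obtain u2 where "u2 \<in> V" "d u2 = k+2" by blast
      ultimately show thesis using that by blast
    qed
    then have "tdist V E k u1 z = tdist V E k u2 z" by (simp add: tdist_def d_def)
    with inj u have "u1 = u2" by (meson inj_onD)
    with u show False by simp
  qed
  have td: "tdist V E k v z = d v" if "v \<in> V" for v
    using bound[OF that] by (simp add: tdist_def d_def)
  have injd: "inj_on d V" using inj td by (simp add: inj_on_def)
  have Vne: "V \<noteq> {}" using c2 by auto
  define M where "M = Max (d ` V)"
  have img: "d ` V = {0..<Suc M}"
  proof
    show "d ` V \<subseteq> {0..<Suc M}" using finV M_def by (auto simp: less_Suc_eq_le)
    obtain v where v: "v \<in> V" "d v = M" using Max_in[of "d ` V"] finV Vne M_def by (metis finite_imageI image_is_empty imageE)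
    show "{0..<Suc M} \<subseteq> d ` V" using reach v by (force simp: less_Suc_eq_le)
  qed
  have cardV: "card V = Suc M" using card_image[OF injd] img by simp
  have bij: "bij_betw d V {0..<Suc M}" using injd img by (simp add: bij_betw_def)
  have Mle: "M \<le> k + 1"
  proof -
    obtain v where v: "v \<in> V" "d v = M" using Max_in[of "d ` V"] finV Vne M_def by (metis finite_imageI image_is_empty imageE)
    then show ?thesis using bound by auto
  qed
  have edges: "E x y \<longleftrightarrow> (d x = d y + 1 \<or> d y = d x + 1)" if xy: "x \<in> V" "y \<in> V" for x y
  proof
    assume e: "E x y"
    have ne: "d x \<noteq> d y" using injd xy Eirr e by (metis inj_onD)
    have "d x \<le> Suc (d y)" using gdist_edge[OF e z] d_def by simp
    moreover have "d y \<le> Suc (d x)" using gdist_edge[OF Esym[OF e] z] d_def by simp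
    ultimately show "d x = d y + 1 \<or> d y = d x + 1" using ne by linarith
  next
    have dn: "E a b" if ab: "a \<in> V" "b \<in> V" "d a = d b + 1" for a b
    proof -
      obtain w where w: "w \<in> V" "E a w" "d w = d b" using gdist_descend[OF ab(1) z] ab(3) d_def by auto
      then have "w = b" using injd ab by (metis inj_onD)
      with w show ?thesis by simp
    qed
    assume "d x = d y + 1 \<or> d y = d x + 1"
    then show "E x y" using dn xy Esym by blast
  qed
  show ?thesis
    using bij edges Mle cardV c2 unfolding iso_to_path_def
    by (intro bexI[of _ "Suc M"]) auto
qed

lemma resolving_ge1:
  assumes c2: "card V \<ge> 2" and h: "k_trunc_resolving_fn V E k h"
  shows "sum h V \<ge> 1"
proof -
  obtain x y where xy: "x \<in> V" "y \<in> V" "x \<noteq> y"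
  proof -
    have "V \<noteq> {}" using c2 by auto
    then obtain x where x: "x \<in> V" by blast
    have "card (V - {x}) \<ge> 1" using c2 x finV by (simp add: card_Diff_singleton)
    then have "V - {x} \<noteq> {}" by (intro notI) simp
    then obtain y where "y \<in> V - {x}" by blast
    then show thesis using that x by blast
  qed
  have "1 \<le> sum h (Rk V E k x y)" using h xy unfolding k_trunc_resolving_fn_def by blast
  also have "\<dots> \<le> sum h V"
    using h finV unfolding k_trunc_resolving_fn_def Rk_def
    by (intro sum_mono2) auto
  finally show ?thesis .
qed

lemma ones_resolving: "k_trunc_resolving_fn V E k (\<lambda>_. 1)"
  unfolding k_trunc_resolving_fn_def
proof (intro conjI ballI impI)
  fix x y assume xy: "x \<in> V" "y \<in> V" "x \<noteq> y"
  have "gdist V E y x \<noteq> 0" using gdist_zero[OF xy(2,1)] xy(3) by blast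
  then have "x \<in> Rk V E k x y" using xy gdist_self[OF xy(1)] by (simp add: Rk_def tdist_def)
  moreover have "finite (Rk V E k x y)" using finV by (simp add: Rk_def)
  ultimately have "card (Rk V E k x y) \<ge> 1" by (auto simp: Suc_le_eq card_gt_0_iff)
  then show "1 \<le> sum (\<lambda>_. 1::real) (Rk V E k x y)" by simp
qed auto

lemma walk_f:
  assumes ed: "\<forall>x\<in>V. \<forall>y\<in>V. E x y \<longrightarrow> f x = f y + 1 \<or> f y = f x + 1"
  shows "is_walk E p \<Longrightarrow> set p \<subseteq> V \<Longrightarrow> (f (hd p) :: nat) \<le> f (last p) + (length p - 1)"
proof (induction p)
  case Nil then show ?case by simp
next
  case (Cons x xs)
  show ?case
  proof (cases xs)
    case Nil then show ?thesis by simp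
  next
    case (Cons y ys)
    have exy: "E x y" and wy: "is_walk E (y # ys)" using Cons.prems(1) Cons by simp_all
    have xy: "x \<in> V" "y \<in> V" using Cons.prems(2) Cons by auto
    have "f x = f y + 1 \<or> f y = f x + 1" using ed xy exy by blast
    then have "f x \<le> f y + 1" by linarith
    moreover have "f y \<le> f (last (y # ys)) + (length (y # ys) - 1)"
      using Cons.IH wy Cons.prems(2) Cons by simp
    ultimately show ?thesis using Cons by simp
  qed
qed

lemma path_dim:
  assumes iso: "iso_to_path V E i" and i: "2 \<le> i" "i \<le> k + 2" and c2: "card V \<ge> 2"
  shows "dim_kf V E k = 1"
proof -
  obtain f where bij: "bij_betw f V {0..<i}"
    and ed: "\<forall>x\<in>V. \<forall>y\<in>V. E x y \<longleftrightarrow> (f x = f y + 1 \<or> f y = f x + 1)"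
    using iso unfolding iso_to_path_def by blast
  have ed': "\<forall>x\<in>V. \<forall>y\<in>V. E x y \<longrightarrow> f x = f y + 1 \<or> f y = f x + 1" using ed by blast
  have img: "f ` V = {0..<i}" using bij by (simp add: bij_betw_def)
  have surj: "\<exists>v\<in>V. f v = n" if "n < i" for n
  proof -
    have "n \<in> f ` V" using img that by simp
    then show ?thesis by blast
  qed
  have injf: "inj_on f V" using bij by (simp add: bij_betw_def)
  have fl: "f x < i" if "x \<in> V" for x
  proof -
    have "f x \<in> f ` V" using that by blast
    then show ?thesis using img by simp
  qed
  have "(0::nat) < i" using i by simp
  then obtain v0 where v0: "v0 \<in> V" "f v0 = 0" using surj by blast
  have up: "\<forall>x\<in>V. f x = n \<longrightarrow> (\<exists>p. is_walk E p \<and> set p \<subseteq> V \<and> hd p = x \<and> last p = v0 \<and> length p = Suc n)" for n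
  proof (induction n)
    case 0
    show ?case
    proof (intro ballI impI)
      fix x assume "x \<in> V" "f x = 0"
      then have "x = v0" using inj_onD[OF injf, of x v0] v0 by simp
      then show "\<exists>p. is_walk E p \<and> set p \<subseteq> V \<and> hd p = x \<and> last p = v0 \<and> length p = Suc 0"
        using v0 by (intro exI[of _ "[x]"]) auto
    qed
  next
    case (Suc n)
    show ?case
    proof (intro ballI impI)
      fix x assume x: "x \<in> V" "f x = Suc n"
      then have "n < i" using fl[OF x(1)] by simp
      then obtain y where y: "y \<in> V" "f y = n" using surj by blast
      have exy: "E x y" using ed x y by simp
      obtain p where p: "is_walk E p" "set p \<subseteq> V" "hd p = y" "last p = v0" "length p = Suc n"
        using Suc.IH y by blast
      then obtain q where q: "p = y # q" by (cases p) auto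
      show "\<exists>p. is_walk E p \<and> set p \<subseteq> V \<and> hd p = x \<and> last p = v0 \<and> length p = Suc (Suc n)"
        using p q x exy by (intro exI[of _ "x # p"]) auto
    qed
  qed
  have gd: "gdist V E x v0 = f x" if x: "x \<in> V" for x
  proof (rule order.antisym)
    obtain p where p: "is_walk E p" "set p \<subseteq> V" "hd p = x" "last p = v0" "length p = Suc (f x)"
      using up x by blast
    show "gdist V E x v0 \<le> f x" using gdist_le[OF p(1-4)] p(5) by simp
  next
    obtain p where p: "is_walk E p" "set p \<subseteq> V" "hd p = x" "last p = v0" "length p = Suc (gdist V E x v0)"
      using walk_exists[OF x v0(1)] by blast
    show "f x \<le> gdist V E x v0" using walk_f[OF ed' p(1,2)] p v0 by simp
  qed
  have td: "tdist V E k x v0 = f x" if "x \<in> V" for x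
    using gd[OF that] fl[OF that] i by (simp add: tdist_def)
  define h where "h = (\<lambda>z. if z = v0 then 1 else (0::real))"
  have hres: "k_trunc_resolving_fn V E k h"
    unfolding k_trunc_resolving_fn_def
  proof (intro conjI ballI impI)
    fix x y assume xy: "x \<in> V" "y \<in> V" "x \<noteq> y"
    have "f x \<noteq> f y" using injf xy by (meson inj_onD)
    then have "v0 \<in> Rk V E k x y" using td xy v0 by (simp add: Rk_def)
    moreover have "finite (Rk V E k x y)" using finV by (simp add: Rk_def)
    ultimately show "1 \<le> sum h (Rk V E k x y)" by (simp add: h_def)
  qed (auto simp: h_def)
  have "sum h V = 1" using finV v0 by (simp add: h_def)
  then show ?thesis unfolding dim_kf_def
    using hres resolving_ge1[OF c2] by (intro cInf_eq_minimum) auto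
qed

lemma gap:
  assumes noinj: "\<forall>z\<in>V. \<not> inj_on (\<lambda>v. tdist V E k v z) V"
    and c2: "card V \<ge> 2" and h: "k_trunc_resolving_fn V E k h"
  shows "real (card V) \<le> (real (card V) - 1) * sum h V"
proof -
  have "\<forall>z\<in>V. \<exists>x y. x \<in> V \<and> y \<in> V \<and> x \<noteq> y \<and> tdist V E k x z = tdist V E k y z"
    using noinj unfolding inj_on_def by blast
  then obtain X Y where XY: "\<forall>z\<in>V. X z \<in> V \<and> Y z \<in> V \<and> X z \<noteq> Y z \<and> tdist V E k (X z) z = tdist V E k (Y z) z"
    by (metis (no_types, lifting))
  define R where "R z = Rk V E k (X z) (Y z)" for z
  have RV: "R z \<subseteq> V" for z by (auto simp: R_def Rk_def)
  have zR: "z \<notin> R z" if "z \<in> V" for z using XY that by (simp add: R_def Rk_def)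
  have h0: "\<forall>z\<in>V. 0 \<le> h z" using h unfolding k_trunc_resolving_fn_def by blast
  have "real (card V) = (\<Sum>z\<in>V. (1::real))" by simp
  also have "\<dots> \<le> (\<Sum>z\<in>V. sum h (R z))"
    using h XY unfolding k_trunc_resolving_fn_def R_def by (intro sum_mono) blast
  also have "\<dots> = (\<Sum>z\<in>V. \<Sum>w\<in>V. if w \<in> R z then h w else 0)"
  proof (rule sum.cong[OF refl])
    fix z assume "z \<in> V"
    have "sum h (R z) = sum h (V \<inter> R z)" using RV[of z] by (simp add: Int_absorb1)
    also have "\<dots> = (\<Sum>w\<in>V. if w \<in> R z then h w else 0)" using finV by (rule sum.inter_restrict)
    finally show "sum h (R z) = (\<Sum>w\<in>V. if w \<in> R z then h w else 0)" .
  qed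
  also have "\<dots> = (\<Sum>w\<in>V. \<Sum>z\<in>V. if w \<in> R z then h w else 0)" by (rule sum.swap)
  also have "\<dots> \<le> (\<Sum>w\<in>V. (real (card V) - 1) * h w)"
  proof (rule sum_mono)
    fix w assume w: "w \<in> V"
    have "(\<Sum>z\<in>V. if w \<in> R z then h w else 0)
        = (if w \<in> R w then h w else 0) + (\<Sum>z\<in>V-{w}. if w \<in> R z then h w else 0)"
      using finV w by (rule sum.remove)
    also have "\<dots> = (\<Sum>z\<in>V-{w}. if w \<in> R z then h w else 0)" using zR[OF w] by simp
    also have "\<dots> \<le> (\<Sum>z\<in>V-{w}. h w)" using h0 w by (intro sum_mono) auto
    also have "\<dots> = (real (card V) - 1) * h w"
    proof -
      have "0 < card V" using finV w card_gt_0_iff by blast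
      then show ?thesis using finV w by (simp add: card_Diff_singleton of_nat_diff)
    qed
    finally show "(\<Sum>z\<in>V. if w \<in> R z then h w else 0) \<le> (real (card V) - 1) * h w" .
  qed
  also have "\<dots> = (real (card V) - 1) * sum h V" by (simp add: sum_distrib_left)
  finally show ?thesis .
qed

end

theorem theorem2p7:
  fixes V :: "'a set" and E :: "'a \<Rightarrow> 'a \<Rightarrow> bool" and k :: nat
  assumes "simple_graph V E" and "connected_graph V E" and "card V \<ge> 2" and "k \<ge> 1"
  shows "dim_kf V E k = 1 \<longleftrightarrow> (\<exists>i\<in>{2..k+2}. iso_to_path V E i)"
proof
  interpret sgraph V E using assms(1,2) by unfold_locales
  assume d1: "dim_kf V E k = 1"
  show "\<exists>i\<in>{2..k+2}. iso_to_path V E i"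
  proof (cases "\<exists>z\<in>V. inj_on (\<lambda>v. tdist V E k v z) V")
    case True
    then show ?thesis using path_from_inj assms(3) by blast
  next
    case False
    define n where "n = real (card V)"
    have n2: "n \<ge> 2" using assms(3) n_def by simp
    have lb: "n / (n - 1) \<le> x" if xin: "x \<in> {sum h V | h. k_trunc_resolving_fn V E k h}" for x
    proof -
      obtain h where h: "k_trunc_resolving_fn V E k h" "x = sum h V" using xin by blast
      have "n \<le> (n - 1) * x" using gap[OF _ assms(3) h(1)] False h(2) n_def by auto
      then show ?thesis using n2 by (simp add: divide_le_eq mult.commute)
    qed
    have ne: "{sum h V | h. k_trunc_resolving_fn V E k h} \<noteq> {}" using ones_resolving by blast
    have "n / (n - 1) \<le> dim_kf V E k" unfolding dim_kf_def using ne lb by (intro cInf_greatest) auto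
    moreover have "n / (n - 1) > 1" using n2 by simp
    ultimately show ?thesis using d1 by simp
  qed
next
  interpret sgraph V E using assms(1,2) by unfold_locales
  assume "\<exists>i\<in>{2..k+2}. iso_to_path V E i"
  then show "dim_kf V E k = 1" using path_dim assms(3) by auto
qed

end
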